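(* Let $h_1,h_2\in\mathbb{C}\setminus\{0\}$ with $|h_1|>|h_2|$, deadlines $D_1<D_2$, minimum blocklength $\hat m>0$, power budget $P_{\max}>0$, packet sizes $N_1,N_2>0$ and error probabilities $\epsilon_1,\epsilon_2\in(0,1)$. For $k=1,2$ define, for $m>0,\gamma>0$, $$F_k(m,\gamma)=\sqrt{\frac{1}{m}\left(1-\frac{1}{(\gamma+1)^2}\right)}\,\frac{Q^{-1}(\epsilon_k)}{\ln 2}-\log_2(1+\gamma)+\frac{N_k}{m},$$ and let $\Gamma_k(m)$ denote the implicit function defined by $F_k(m,\Gamma_k(m))=0$, $\Gamma_k(m)>0$. Consider the problem $$\min_{\{m_k,p_k,\gamma_k\}_{k=1,2}} m_1p_1+m_2p_2$$ subject to $F_k(m_k,\gamma_k)=0$, $\hat m\le m_k$, $p_k\ge0$ for $k=1,2$, $p_1+p_2\le P_{\max}$, $m_1\le D_1$, $m_2\le m_1$, $\gamma_1=p_1|h_1|^2$, $\gamma_2=\frac{p_2|h_2|^2}{p_1|h_2|^2+1}$. If $\frac{Q^{-1}(\epsilon_k)}{\sqrt{N_k}}\le \frac{2\sqrt{\ln 2}}{4-\sqrt2}=0.64394\ldots$ for $k=1,2$ and the problem is feasible, then an optimal solution is $$m_1^*=m_2^*=D_1,\quad \gamma_k^*=\Gamma_k(D_1)\ (k=1,2),\quad p_1^*=\frac{\gamma_1^*}{|h_1|^2},\quad p_2^*=\frac{\gamma_1^*\gamma_2^*}{|h_1|^2}+\frac{\gamma_2^*}{|h_2|^2}.$$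
   Context: $Q^{-1}$ is the inverse of the Gaussian Q-function. The setting is a two-user single-antenna downlink with superposition coding and unit noise variances, where receiver 2's blocklength is forced to be at most receiver 1's so that receiver 1 can perform successive interference cancellation, while receiver 2 treats receiver 1's signal as noise. Blocklengths $m_k$ are treated as continuous variables. The constraint $F_k(m_k,\gamma_k)=0$ is the finite-blocklength rate relation $\frac{N_k}{m_k}=\log_2(1+\gamma_k)-\sqrt{\frac{1}{m_k}\big(1-\frac{1}{(1+\gamma_k)^2}\big)}\frac{Q^{-1}(\epsilon_k)}{\ln2}$. *)

theory Defs
  imports "HOL-Probability.Probability"
begin

definition Qfun :: "real \<Rightarrow> real" where
  "Qfun x = (LBINT t:{x<..}. std_normal_density t)"

text \<open>Inverse of the Gaussian Q-function (Q is a strictly decreasing bijection onto (0,1)).\<close>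
definition Qinv :: "real \<Rightarrow> real" where
  "Qinv e = (THE x. Qfun x = e)"

definition Ffun :: "real \<Rightarrow> real \<Rightarrow> real \<Rightarrow> real \<Rightarrow> real" where
  "Ffun N eps m g = sqrt ((1 / m) * (1 - 1 / (g + 1)^2)) * Qinv eps / ln 2
                     - log 2 (1 + g) + N / m"

definition Gam :: "real \<Rightarrow> real \<Rightarrow> real \<Rightarrow> real" where
  "Gam N eps m = (THE g. g > 0 \<and> Ffun N eps m g = 0)"

definition feasible ::
  "complex \<Rightarrow> complex \<Rightarrow> real \<Rightarrow> real \<Rightarrow> real \<Rightarrow> real \<Rightarrow> real \<Rightarrow> real \<Rightarrow> real
   \<Rightarrow> real \<Rightarrow> real \<Rightarrow> real \<Rightarrow> real \<Rightarrow> real \<Rightarrow> real \<Rightarrow> bool" where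
  "feasible h1 h2 D1 mhat Pmax N1 N2 e1 e2 m1 m2 p1 p2 g1 g2 \<longleftrightarrow>
     Ffun N1 e1 m1 g1 = 0 \<and> Ffun N2 e2 m2 g2 = 0 \<and>
     mhat \<le> m1 \<and> mhat \<le> m2 \<and> p1 \<ge> 0 \<and> p2 \<ge> 0 \<and>
     p1 + p2 \<le> Pmax \<and> m1 \<le> D1 \<and> m2 \<le> m1 \<and>
     g1 = p1 * (cmod h1)^2 \<and>
     g2 = p2 * (cmod h2)^2 / (p1 * (cmod h2)^2 + 1)"

end

theory Submission
  imports Defs
begin



definition qroot :: "real \<Rightarrow> real \<Rightarrow> real \<Rightarrow> real" where
  "qroot N b q = (- b + sqrt (b^2 + 4*N*q)) / (2*N)"

lemma qroot_pos: assumes "N > 0" "q > 0" shows "qroot N b q > 0"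
proof -
  have "sqrt (b^2) < sqrt (b^2 + 4*N*q)" using assms by (intro real_sqrt_less_mono) auto
  hence "b < sqrt (b^2 + 4*N*q)" by (smt (verit) real_sqrt_abs)
  thus ?thesis using assms unfolding qroot_def by (auto intro!: divide_pos_pos)
qed

lemma qroot_eq: assumes "N > 0" "q > 0" shows "N * (qroot N b q)^2 + b * qroot N b q - q = 0"
proof -
  let ?r = "sqrt (b^2 + 4*N*q)"
  have nn: "b^2 + 4*N*q \<ge> 0" using assms by (smt (verit) mult_pos_pos zero_le_power2)
  have r2: "?r^2 = b^2 + 4*N*q" using nn by simp
  have "N * (qroot N b q)^2 + b * qroot N b q - q = (?r^2 - b^2 - 4*N*q) / (4*N)"
    unfolding qroot_def using assms by (simp add: field_simps power2_eq_square)
  thus ?thesis using r2 by simp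
qed

lemma qroot_unique: assumes "N > 0" "q > 0" "y > 0" "N * y^2 + b * y - q = 0"
  shows "y = qroot N b q"
proof -
  have qd: "q = N * y^2 + b * y" using assms(4) by linarith
  have "y * (N*y + b) = q" using qd by (simp add: algebra_simps power2_eq_square)
  hence "0 < y * (N*y + b)" using assms by simp
  hence "N*y + b > 0" using assms(3) zero_less_mult_pos by blast
  moreover have "N*y > 0" using assms by simp
  ultimately have pos: "2*N*y + b > 0" by linarith
  have "(2*N*y + b)^2 = b^2 + 4*N*q" unfolding qd by (simp add: algebra_simps power2_eq_square)
  hence "2*N*y + b = sqrt (b^2 + 4*N*q)" using pos by (metis abs_of_pos real_sqrt_abs)
  thus ?thesis unfolding qroot_def using assms by (simp add: field_simps)
qed

lemma qroot_le: assumes "N > 0" "q > 0" "b \<ge> 0" "t > 0" "N * t^2 + b * t \<ge> q"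
  shows "qroot N b q \<le> t"
proof (rule ccontr)
  assume "\<not> ?thesis"
  hence lt: "t < qroot N b q" by simp
  have "N * t^2 < N * (qroot N b q)^2" using lt assms by (intro mult_strict_left_mono power_strict_mono) auto
  moreover have "b * t \<le> b * qroot N b q" using lt assms by (intro mult_left_mono) auto
  ultimately show False using qroot_eq[OF assms(1,2), of b] assms(5) by linarith
qed




lemma ln_lower: assumes "x \<ge> (0::real)" shows "2*x/(2+x) \<le> ln (1+x)"
proof -
  let ?f = "\<lambda>t::real. ln (1+t) - 2*t/(2+t)"
  have "?f 0 \<le> ?f x"
  proof (rule DERIV_nonneg_imp_nondecreasing[OF assms])
    fix t :: real assume t: "0 \<le> t" "t \<le> x"
    have "DERIV ?f t :> 1/(1+t) - 4/(2+t)^2"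
      using t by (auto intro!: derivative_eq_intros simp: field_simps power2_eq_square)
    moreover have "1/(1+t) - 4/(2+t)^2 = t^2/((1+t)*(2+t)^2)"
    proof -
      have "(1+t) > 0" "(2+t)^2 > 0" using t by auto
      thus ?thesis by (simp add: field_simps power2_eq_square)
    qed
    moreover have "t^2/((1+t)*(2+t)^2) \<ge> 0" using t by simp
    ultimately show "\<exists>y. DERIV ?f t :> y \<and> y \<ge> 0" by auto
  qed
  thus ?thesis by simp
qed

lemma poly_key:
  fixes x l :: real
  assumes x: "x > 0" and l: "2*x/(2+x) \<le> l"
  shows "4*(x+2)*(1+x)^2*((1+x)*l - x)^2
         + (2/3)*(2*(x+3)*(x+2)*x^2*((1+x)*l - x) - x^3*l*(x+3)^2) \<ge> 0"
proof -
  define d where "d = (2+x)*l - 2*x"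
  have d: "d \<ge> 0" using l x unfolding d_def by (simp add: field_simps)
  have id: "(4*(x+2)*(1+x)^2*((1+x)*l - x)^2
         + (2/3)*(2*(x+3)*(x+2)*x^2*((1+x)*l - x) - x^3*l*(x+3)^2)) * (2+x)^2
      = x^4*(x+2)*(4*x^2 + 20/3*x) + x^2*(x+2)*d*(8*(1+x)^3 + 2/3*(x+3)*(x^2+3*x+4))
        + 4*(x+2)*(1+x)^4*d^2"
    unfolding d_def by algebra
  have "x^4*(x+2)*(4*x^2 + 20/3*x) + x^2*(x+2)*d*(8*(1+x)^3 + 2/3*(x+3)*(x^2+3*x+4))
        + 4*(x+2)*(1+x)^4*d^2 \<ge> 0" using x d by (intro add_nonneg_nonneg mult_nonneg_nonneg) auto
  hence "(4*(x+2)*(1+x)^2*((1+x)*l - x)^2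
         + (2/3)*(2*(x+3)*(x+2)*x^2*((1+x)*l - x) - x^3*l*(x+3)^2)) * (2+x)^2 \<ge> 0"
    using id by simp
  moreover have "(2+x)^2 > 0" using x by simp
  ultimately show ?thesis by (simp add: zero_le_mult_iff)
qed




definition sf :: "real \<Rightarrow> real" where "sf g = sqrt (1 - 1/(g+1)^2)"
definition Lf :: "real \<Rightarrow> real" where "Lf g = log 2 (1+g)"
definition al :: "real \<Rightarrow> real" where "al g = sqrt (g+2)/(1+g)"
definition be :: "real \<Rightarrow> real" where "be g = ln (1+g)/(g * ln 2)"

lemma sf_eq: assumes "g > 0" shows "sf g = sqrt g * al g"
proof -
  have p: "(g+1)^2 > 0" using assms by simp
  have "1 - 1/(g+1)^2 = ((g+1)^2 - 1)/(g+1)^2" using p by (simp add: field_simps)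
  also have "\<dots> = g * (g+2) / (1+g)^2" by (simp add: power2_eq_square algebra_simps)
  finally have "1 - 1/(g+1)^2 = g * (g+2) / (1+g)^2" .
  hence "sf g = sqrt (g * (g+2)) / sqrt ((1+g)^2)" unfolding sf_def by (simp add: real_sqrt_divide)
  also have "\<dots> = sqrt g * al g" using assms unfolding al_def by (simp add: real_sqrt_mult)
  finally show ?thesis .
qed

lemma Lf_eq: assumes "g > 0" shows "Lf g = g * be g"
  using assms unfolding Lf_def be_def log_def by (simp add: field_simps)

lemma al_pos: "g > 0 \<Longrightarrow> al g > 0" unfolding al_def by simp
lemma be_pos: "g > 0 \<Longrightarrow> be g > 0" unfolding be_def by (simp add: divide_pos_pos)
lemma Lf_pos: "g > 0 \<Longrightarrow> Lf g > 0" unfolding Lf_def by simp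
lemma sf_pos: "g > 0 \<Longrightarrow> sf g > 0" using sf_eq al_pos by simp

definition Xf :: "real \<Rightarrow> real \<Rightarrow> real \<Rightarrow> real" where "Xf N c g = qroot N (c * sf g) (Lf g)"
definition Tf :: "real \<Rightarrow> real \<Rightarrow> real \<Rightarrow> real" where "Tf N c g = qroot N (c * al g) (be g)"

lemma qroot_scale: assumes "g > 0" "N > 0"
  shows "qroot N (sqrt g * b) (g * q) = sqrt g * qroot N b q"
proof -
  have "(sqrt g * b)^2 + 4*N*(g*q) = g * (b^2 + 4*N*q)" using assms by (simp add: power_mult_distrib algebra_simps)
  hence "sqrt ((sqrt g * b)^2 + 4*N*(g*q)) = sqrt g * sqrt (b^2 + 4*N*q)" by (simp add: real_sqrt_mult)
  thus ?thesis unfolding qroot_def using assms by (simp add: field_simps)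
qed

lemma Xf_Tf: assumes "g > 0" "N > 0" shows "Xf N c g = sqrt g * Tf N c g"
  unfolding Xf_def Tf_def using assms qroot_scale[OF assms, of "c * al g" "be g"]
  by (simp add: sf_eq Lf_eq mult.left_commute)

lemma Ffun_alt: assumes "m > 0" "g > 0"
  shows "Ffun N e m g = N * (1/sqrt m)^2 + (Qinv e / ln 2 * sf g) * (1/sqrt m) - Lf g"
proof -
  have "sqrt ((1 / m) * (1 - 1 / (g + 1)^2)) = (1/sqrt m) * sf g"
    unfolding sf_def by (simp add: real_sqrt_mult real_sqrt_divide)
  moreover have "N / m = N * (1/sqrt m)^2" using assms by (simp add: power_divide)
  ultimately show ?thesis unfolding Ffun_def Lf_def by (simp add: algebra_simps)
qed

lemma root_iff: assumes "N > 0" "m > 0" "g > 0"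
  shows "Ffun N e m g = 0 \<longleftrightarrow> Xf N (Qinv e / ln 2) g = 1/sqrt m"
proof
  assume "Ffun N e m g = 0"
  hence "N * (1/sqrt m)^2 + (Qinv e / ln 2 * sf g) * (1/sqrt m) - Lf g = 0"
    using Ffun_alt[OF assms(2,3)] by simp
  from qroot_unique[OF assms(1) Lf_pos[OF assms(3)] _ this] assms
  show "Xf N (Qinv e / ln 2) g = 1/sqrt m" unfolding Xf_def by simp
next
  assume "Xf N (Qinv e / ln 2) g = 1/sqrt m"
  thus "Ffun N e m g = 0" using Ffun_alt[OF assms(2,3)] qroot_eq[OF assms(1) Lf_pos[OF assms(3)]]
    unfolding Xf_def by metis
qed

lemma root_Tf: assumes "N > 0" "m > 0" "g > 0" "Ffun N e m g = 0"
  shows "Tf N (Qinv e / ln 2) g = 1/sqrt (m*g)"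
proof -
  have "sqrt g * Tf N (Qinv e / ln 2) g = 1/sqrt m" using root_iff assms Xf_Tf by metis
  thus ?thesis using assms by (simp add: field_simps real_sqrt_mult)
qed

lemma Xf_pos: "N > 0 \<Longrightarrow> g > 0 \<Longrightarrow> Xf N c g > 0" unfolding Xf_def by (simp add: qroot_pos Lf_pos)
lemma Tf_pos: "N > 0 \<Longrightarrow> g > 0 \<Longrightarrow> Tf N c g > 0" unfolding Tf_def by (simp add: qroot_pos be_pos)

lemma Xf_cont: assumes "N > 0" "0 \<le> a" shows "continuous_on {a..b} (Xf N c)"
  unfolding Xf_def qroot_def sf_def Lf_def log_def using assms
  by (auto intro!: continuous_intros)

lemma Xf_0: "Xf N c 0 = 0" unfolding Xf_def qroot_def sf_def Lf_def by simp




lemma implicit_qroot: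
  assumes N: "N > 0" and S: "open S" "x \<in> S" and qp: "\<And>y. y \<in> S \<Longrightarrow> q y > 0"
    and db: "(b has_real_derivative b') (at x)" and dq: "(q has_real_derivative q') (at x)"
    and dr: "((\<lambda>y. qroot N (b y) (q y)) has_real_derivative D) (at x)"
  shows "D * (2*N*qroot N (b x) (q x) + b x) = q' - b' * qroot N (b x) (q x)"
proof -
  let ?r = "\<lambda>y. qroot N (b y) (q y)"
  have d1: "((\<lambda>y. N*(?r y)^2 + b y * ?r y - q y) has_real_derivative
      N*(2*?r x*D) + (b'*?r x + b x*D) - q') (at x)"
    using db dq dr by (auto intro!: derivative_eq_intros)
  have d0: "((\<lambda>y. 0::real) has_real_derivative 0) (at x)" by simp
  have d2: "((\<lambda>y. N*(?r y)^2 + b y * ?r y - q y) has_real_derivative 0) (at x)"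
  proof (rule has_field_derivative_transform_within_open[OF d0 S])
    fix y assume "y \<in> S"
    show "0 = N*(?r y)^2 + b y * ?r y - q y" using qroot_eq[OF N qp[OF \<open>y \<in> S\<close>]] by simp
  qed
  have "N*(2*?r x*D) + (b'*?r x + b x*D) - q' = 0" using DERIV_unique[OF d1 d2] .
  thus ?thesis by (simp add: algebra_simps)
qed

lemma qroot_lin_pos: assumes "N > 0" "q > 0" shows "2*N*qroot N b q + b > 0"
proof -
  have "2*N*qroot N b q + b = sqrt (b^2 + 4*N*q)" unfolding qroot_def using assms by simp
  moreover have "b^2 + 4*N*q > 0" using assms by (smt (verit) mult_pos_pos zero_le_power2)
  ultimately show ?thesis by simp
qed

lemma l2pos: "ln (2::real) > 0" by simp

lemma sf_deriv: assumes "x > 0" shows "(sf has_real_derivative 1/((x+1)^3 * sf x)) (at x)"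
proof -
  have p: "1 - 1/(x+1)^2 > 0" using assms by (simp add: field_simps)
  have x1: "x + 1 > 0" "(x+1)^2 > 0" "(x+1)^3 > 0" using assms by auto
  have du: "((\<lambda>y. 1 - 1/(y+1)^2) has_real_derivative 2/(x+1)^3) (at x)"
    using x1 by (auto intro!: derivative_eq_intros simp: field_simps) algebra
  have "((\<lambda>y. sqrt (1 - 1/(y+1)^2)) has_real_derivative
        inverse (sqrt (1 - 1/(x+1)^2)) / 2 * (2/(x+1)^3)) (at x)"
    by (rule DERIV_chain2[OF DERIV_real_sqrt[OF p] du])
  moreover have "inverse (sqrt (1 - 1/(x+1)^2)) / 2 * (2/(x+1)^3) = 1/((x+1)^3 * sf x)"
    unfolding sf_def by (simp add: field_simps)
  ultimately show ?thesis unfolding sf_def[abs_def] by simp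
qed

lemma Lf_deriv: assumes "x > 0" shows "(Lf has_real_derivative 1/((1+x) * ln 2)) (at x)"
proof -
  have "((\<lambda>x. ln (1+x) / ln 2) has_real_derivative (1/(1+x)) / ln 2) (at x)" using assms
    by (auto intro!: derivative_eq_intros)
  thus ?thesis unfolding Lf_def[abs_def] log_def by simp
qed

lemma al_deriv: assumes "x > 0"
  shows "(al has_real_derivative - (x+3)/(2 * sqrt(x+2)*(1+x)^2)) (at x)"
proof -
  have r: "sqrt (x+2) > 0" "sqrt (x+2) * sqrt (x+2) = x + 2" using assms by auto
  have "((\<lambda>y. sqrt (y+2)/(1+y)) has_real_derivative
     ((1 / (2 * sqrt (x+2))) * (1+x) - sqrt (x+2)) / (1+x)^2) (at x)"
    using assms by (auto intro!: derivative_eq_intros simp: field_simps power2_eq_square)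
  moreover have "((1 / (2 * sqrt (x+2))) * (1+x) - sqrt (x+2)) / (1+x)^2
      = - (x+3)/(2 * sqrt(x+2)*(1+x)^2)"
    using r assms by (simp add: field_simps power2_eq_square)
  ultimately show ?thesis unfolding al_def[abs_def] by simp
qed

lemma be_deriv: assumes "x > 0"
  shows "(be has_real_derivative (x - (1+x)*ln(1+x))/((1+x)*x^2*ln 2)) (at x)"
proof -
  have "((\<lambda>y. ln (1+y)/(y * ln 2)) has_real_derivative
     ((1/(1+x)) * (x * ln 2) - ln (1+x) * ln 2) / (x * ln 2)^2) (at x)"
    using assms by (auto intro!: derivative_eq_intros simp: field_simps power2_eq_square)
  moreover have "((1/(1+x)) * (x * ln 2) - ln (1+x) * ln 2) / (x * ln 2)^2
     = (x - (1+x)*ln(1+x))/((1+x)*x^2*ln 2)"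
  proof -
    have "ln (2::real) \<noteq> 0" "x \<noteq> 0" "1 + x \<noteq> 0" using assms by auto
    thus ?thesis by (simp add: divide_simps) algebra
  qed
  ultimately show ?thesis unfolding be_def[abs_def] by simp
qed

lemma qroot_deriv:
  assumes "N > 0" "(b has_real_derivative b') (at x)" "(q has_real_derivative q') (at x)"
    "b x ^2 + 4*N*q x > 0"
  shows "\<exists>D. ((\<lambda>x. qroot N (b x) (q x)) has_real_derivative D) (at x)"
proof -
  have d1: "((\<lambda>y. b y ^2 + 4*N*q y) has_real_derivative (2*b x*b' + 4*N*q')) (at x)"
    using assms by (auto intro!: derivative_eq_intros)
  have d2: "((\<lambda>y. sqrt (b y ^2 + 4*N*q y)) has_real_derivative
     inverse (sqrt (b x ^2 + 4*N*q x))/2 * (2*b x*b' + 4*N*q')) (at x)"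
    by (rule DERIV_chain2[OF DERIV_real_sqrt[OF assms(4)] d1])
  have "((\<lambda>y. (- b y + sqrt (b y ^2 + 4*N*q y)) / (2*N)) has_real_derivative
     (- b' + inverse (sqrt (b x ^2 + 4*N*q x))/2 * (2*b x*b' + 4*N*q')) / (2*N)) (at x)"
    by (intro DERIV_cdivide DERIV_add DERIV_minus assms(2) d2)
  thus ?thesis unfolding qroot_def by blast
qed




lemma ident_K:
  fixes x l lam :: real
  assumes "x > 0" "lam > 0"
  shows "(3/2*lam*(((1+x)*l - x)/((1+x)*x^2*lam))^2 + (x+3)/(2*(1+x)^3) * (((1+x)*l - x)/((1+x)*x^2*lam))
      - l/(x*lam) * ((x+3)^2/(4*(x+2)*(1+x)^4))) * (8*lam*x^4*(x+2)*(1+x)^4)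
     = 3 * (4*(x+2)*(1+x)^2*((1+x)*l - x)^2
         + (2/3)*(2*(x+3)*(x+2)*x^2*((1+x)*l - x) - x^3*l*(x+3)^2))"
proof -
  have "x \<noteq> 0" "lam \<noteq> 0" "1 + x \<noteq> 0" "x + 2 \<noteq> 0" using assms by auto
  thus ?thesis by (simp add: divide_simps) algebra
qed

lemma Xf_fun: "Xf N c = (\<lambda>y. qroot N (c * sf y) (Lf y))" by (simp add: Xf_def fun_eq_iff)
lemma Tf_fun: "Tf N c = (\<lambda>y. qroot N (c * al y) (be y))" by (simp add: Tf_def fun_eq_iff)

lemma Xf_deriv_pos: assumes N: "N > 0" and x: "x > 0"
  shows "\<exists>y. (Xf N c has_real_derivative y) (at x) \<and> y > 0"
proof -
  define s where "s = sf x"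
  define L where "L = Lf x"
  define X where "X = Xf N c x"
  define b' where "b' = c * (1/((x+1)^3 * s))"
  define q' where "q' = 1/((1+x) * ln 2)"
  have s: "s > 0" using sf_pos x s_def by simp
  have Lp: "L > 0" using Lf_pos x L_def by simp
  have Xp: "X > 0" using Xf_pos N x X_def by simp
  have db: "((\<lambda>y. c * sf y) has_real_derivative b') (at x)"
    unfolding b'_def s_def by (rule DERIV_cmult[OF sf_deriv[OF x]])
  have dq: "(Lf has_real_derivative q') (at x)" unfolding q'_def by (rule Lf_deriv[OF x])
  have pos: "(c * sf x)^2 + 4*N*Lf x > 0" using N Lp L_def
    by (smt (verit) mult_pos_pos zero_le_power2)
  obtain D where dD: "((\<lambda>y. qroot N (c * sf y) (Lf y)) has_real_derivative D) (at x)"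
    using qroot_deriv[OF N db dq pos] by blast
  have imp: "D * (2*N*X + c* s) = q' - b' * X"
    using implicit_qroot[OF N open_greaterThan[of 0] _ _ db dq dD] x Lf_pos
    unfolding X_def Xf_def s_def by simp
  have lin: "2*N*X + c* s > 0" using qroot_lin_pos[OF N Lp] unfolding X_def Xf_def s_def L_def by simp
  have key: "q' - b' * X > 0"
  proof (cases "c \<le> 0")
    case True
    have "b' \<le> 0" unfolding b'_def using True s x by (simp add: divide_nonpos_pos)
    hence "b' * X \<le> 0" using Xp by (simp add: mult_nonpos_nonneg)
    moreover have "q' > 0" unfolding q'_def using x by simp
    ultimately show ?thesis by linarith
  next
    case False
    hence c: "c > 0" by simp
    have "N * X^2 + (c* s) * X - L = 0" using qroot_eq[OF N Lp] unfolding X_def Xf_def s_def L_def by simp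
    moreover have "N * X^2 \<ge> 0" using N by simp
    ultimately have csX: "c* s*X \<le> L" by linarith
    have s2: "(x+1)^3 * s^2 = (x+1)*x*(x+2)"
    proof -
      have "1 - 1/(x+1)^2 \<ge> 0" using x by (simp add: field_simps)
      hence "s^2 = 1 - 1/(x+1)^2" unfolding s_def sf_def by simp
      hence "s^2 * (x+1)^2 = (1 - 1/(x+1)^2) * (x+1)^2" by simp
      also have "\<dots> = (x+1)^2 - 1" using x by (simp add: left_diff_distrib)
      also have "\<dots> = x*(x+2)" by (simp add: power2_eq_square algebra_simps)
      finally have h: "s^2 * (x+1)^2 = x*(x+2)" .
      have "(x+1)^3 * s^2 = (x+1) * (s^2 * (x+1)^2)" by (simp add: power2_eq_square power3_eq_cube)
      thus ?thesis using h by simp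
    qed
    have "b' * X = (c* s*X) / ((x+1)^3 * s^2)" unfolding b'_def using s by (simp add: field_simps power2_eq_square)
    also have "\<dots> \<le> L / ((x+1)^3 * s^2)" using csX s x by (intro divide_right_mono) auto
    also have "\<dots> = L / ((x+1)*x*(x+2))" using s2 by simp
    also have "\<dots> \<le> (x / ln 2) / ((x+1)*x*(x+2))"
    proof -
      have "L \<le> x / ln 2" unfolding L_def Lf_def log_def using ln_add_one_self_le_self[of x] x
        by (simp add: divide_right_mono)
      thus ?thesis using x by (intro divide_right_mono) auto
    qed
    also have "\<dots> = 1 / (ln 2 * (x+1) * (x+2))"
    proof -
      have "x \<noteq> 0" "x + 1 \<noteq> 0" "x + 2 \<noteq> 0" "ln (2::real) \<noteq> 0" using x by auto
      thus ?thesis by (simp add: divide_simps)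
    qed
    also have "\<dots> < q'"
    proof -
      have a: "0 < (1+x)*ln 2" using x l2pos by simp
      have e: "ln 2*(x+1)*(x+2) = ((1+x)*ln 2)*(x+2)" by (simp add: algebra_simps)
      have b: "(1+x)*ln 2 < ln 2*(x+1)*(x+2)" unfolding e using a x
        by (metis less_add_same_cancel2 mult.right_neutral mult_strict_left_mono one_less_numeral_iff semiring_norm(76) add_less_cancel_right add.commute zero_less_one less_trans)
      have c: "0 < (ln 2*(x+1)*(x+2)) * ((1+x)*ln 2)" using a b x by (intro mult_pos_pos) auto
      show ?thesis unfolding q'_def using divide_strict_left_mono[OF b zero_less_one c] .
    qed
    finally show ?thesis by simp
  qed
  have "D > 0" using imp lin key by (metis zero_less_mult_pos2)
  thus ?thesis using dD unfolding Xf_fun by blast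
qed

lemma Xf_strict_mono: assumes "N > 0" "0 < g" "g < g'" shows "Xf N c g < Xf N c g'"
  using assms by (intro DERIV_pos_imp_increasing[OF assms(3)]) (auto intro!: Xf_deriv_pos)




lemma Tf_deriv_nonpos: assumes N: "N > 0" and x: "x > 0"
  and cond: "c \<le> 0 \<or> c^2 * ln 2 \<le> 2/3 * N"
  shows "\<exists>y. (Tf N c has_real_derivative y) (at x) \<and> y \<le> 0"
proof -
  define a where "a = al x"
  define \<beta> where "\<beta> = be x"
  define T where "T = Tf N c x"
  define l where "l = ln (1+x)"
  define A where "A = (x+3)/(2 * sqrt(x+2)*(1+x)^2)"
  define B where "B = ((1+x)*l - x)/((1+x)*x^2*ln 2)"
  define b' where "b' = c * (- (x+3)/(2 * sqrt(x+2)*(1+x)^2))"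
  define q' where "q' = (x - (1+x)*l)/((1+x)*x^2*ln 2)"
  have ap: "a > 0" using al_pos x a_def by simp
  have bp: "\<beta> > 0" using be_pos x \<beta>_def by simp
  have Tp: "T > 0" using Tf_pos N x T_def by simp
  have db: "((\<lambda>y. c * al y) has_real_derivative b') (at x)"
    unfolding b'_def by (rule DERIV_cmult[OF al_deriv[OF x]])
  have dq: "(be has_real_derivative q') (at x)" unfolding q'_def l_def by (rule be_deriv[OF x])
  have pos: "(c * al x)^2 + 4*N*be x > 0" using N bp \<beta>_def
    by (smt (verit) mult_pos_pos zero_le_power2)
  obtain D where dD: "((\<lambda>y. qroot N (c * al y) (be y)) has_real_derivative D) (at x)"
    using qroot_deriv[OF N db dq pos] by blast
  have imp: "D * (2*N*T + c * a) = q' - b' * T"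
    using implicit_qroot[OF N open_greaterThan[of 0] _ _ db dq dD] x be_pos
    unfolding T_def Tf_def a_def by simp
  have lin: "2*N*T + c * a > 0" using qroot_lin_pos[OF N bp] unfolding T_def Tf_def a_def \<beta>_def by simp
  have b'A: "b' = - (c * A)" unfolding b'_def A_def minus_divide_left[symmetric] by simp
  have q'B: "q' = - B"
  proof -
    have e: "x - (1+x)*l = - ((1+x)*l - x)" by simp
    show ?thesis by (simp only: q'_def B_def e minus_divide_left)
  qed
  have lw: "2*x/(2+x) \<le> l" unfolding l_def using ln_lower x by simp
  have Bp: "B > 0"
  proof -
    have "(1+x)*(2*x/(2+x)) - x = x^2/(2+x)" using x by (simp add: divide_simps) algebra
    moreover have "(1+x)*(2*x/(2+x)) \<le> (1+x)*l" using lw x by (intro mult_left_mono) auto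
    moreover have "x^2/(2+x) > 0" using x by simp
    ultimately have "(1+x)*l - x > 0" by linarith
    thus ?thesis unfolding B_def using x by (intro divide_pos_pos) auto
  qed
  have Ap: "A > 0" unfolding A_def using x by (intro divide_pos_pos) auto
  have key: "c * A * T \<le> B"
  proof (cases "c \<le> 0")
    case True
    have "c * A * T \<le> 0" using True Ap Tp by (simp add: mult_nonpos_nonneg)
    thus ?thesis using Bp by linarith
  next
    case False
    hence c: "c > 0" by simp
    hence c2: "c^2 * ln 2 \<le> 2/3 * N" using cond by simp
    define t0 where "t0 = B / (c * A)"
    have t0p: "t0 > 0" unfolding t0_def using Bp c Ap by simp
    have r: "sqrt (x+2) > 0" "sqrt (x+2) * sqrt (x+2) = x + 2" using x by auto
    have nz: "sqrt (x+2) \<noteq> 0" "1 + x \<noteq> 0" "x + 2 \<noteq> 0" using x by auto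
    have aA: "a * A = (x+3)/(2*(1+x)^3)" unfolding a_def al_def A_def using nz
      by (simp add: divide_simps power3_eq_cube power2_eq_square)
    have A2: "A^2 = (x+3)^2/(4*(x+2)*(1+x)^4)" unfolding A_def using nz r(2)
      by (simp add: divide_simps)
    have bl: "\<beta> = l/(x * ln 2)" unfolding \<beta>_def be_def l_def ..
    define K where "K = 3/2*ln 2*B^2 + (a*A)*B - \<beta>*A^2"
    have K0: "K \<ge> 0"
    proof -
      have idK: "K * (8*ln 2*x^4*(x+2)*(1+x)^4)
         = 3 * (4*(x+2)*(1+x)^2*((1+x)*l - x)^2
         + (2/3)*(2*(x+3)*(x+2)*x^2*((1+x)*l - x) - x^3*l*(x+3)^2))"
        unfolding K_def aA A2 bl B_def using ident_K[OF x l2pos, of l] by simp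
      have "(4*(x+2)*(1+x)^2*((1+x)*l - x)^2
         + (2/3)*(2*(x+3)*(x+2)*x^2*((1+x)*l - x) - x^3*l*(x+3)^2)) \<ge> 0"
        by (rule poly_key[OF x lw])
      hence "K * (8*ln 2*x^4*(x+2)*(1+x)^4) \<ge> 0" unfolding idK by (intro mult_nonneg_nonneg) auto
      moreover have "8*ln 2*x^4*(x+2)*(1+x)^4 > 0" using x l2pos by simp
      ultimately show ?thesis by (simp add: zero_le_mult_iff)
    qed
    have ct: "c^2 * t0^2 = B^2/A^2" unfolding t0_def using c Ap by (simp add: power_divide power_mult_distrib)
    have cat: "c * a * t0 = a * B / A" unfolding t0_def using c Ap by simp
    have "N * t0^2 \<ge> 3/2 * (c^2 * ln 2) * t0^2" using c2 by (intro mult_right_mono) auto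
    also have "3/2 * (c^2 * ln 2) * t0^2 = 3/2 * ln 2 * (B^2/A^2)" using ct by (simp add: algebra_simps)
    finally have Nt: "N * t0^2 \<ge> 3/2 * ln 2 * (B^2/A^2)" .
    have "3/2 * ln 2 * (B^2/A^2) + a*B/A - \<beta> = K / A^2" unfolding K_def using Ap
      by (simp add: field_simps power2_eq_square)
    hence "3/2 * ln 2 * (B^2/A^2) + a*B/A - \<beta> \<ge> 0" using K0 Ap by simp
    hence ineq: "N * t0^2 + (c * a) * t0 \<ge> \<beta>" using Nt cat by linarith
    have "T \<le> t0" unfolding T_def Tf_def
      using qroot_le[OF N bp _ t0p ineq] c ap \<beta>_def a_def by simp
    hence "c * A * T \<le> c * A * t0" using c Ap by (intro mult_left_mono) auto
    also have "c * A * t0 = B" unfolding t0_def using c Ap by simp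
    finally show ?thesis .
  qed
  have "q' - b' * T \<le> 0" using key b'A q'B by simp
  hence "D \<le> 0" using imp lin by (smt (verit) mult_pos_pos) 
  thus ?thesis using dD unfolding Tf_fun by blast
qed




lemma Tf_antimono: assumes "N > 0" "c \<le> 0 \<or> c^2 * ln 2 \<le> 2/3 * N" "0 < g" "g \<le> g'"
  shows "Tf N c g' \<le> Tf N c g"
  using assms by (intro DERIV_nonpos_imp_nonincreasing[OF assms(4)]) (auto intro!: Tf_deriv_nonpos)

lemma cond_from: assumes N: "N > 0" and h: "Qinv e / sqrt N \<le> 2 * sqrt (ln 2) / (4 - sqrt 2)"
  shows "Qinv e / ln 2 \<le> 0 \<or> (Qinv e / ln 2)^2 * ln 2 \<le> 2/3 * N"
proof (cases "Qinv e \<le> 0")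
  case True thus ?thesis using l2pos by (simp add: divide_nonpos_pos)
next
  case False
  hence a: "Qinv e > 0" by simp
  have s2: "sqrt 2 \<le> 3/2"
    by (rule real_le_lsqrt) (auto simp: power2_eq_square)
  have d: "4 - sqrt 2 > 0" using s2 by simp
  have "(4 - sqrt 2)^2 = 18 - 8 * sqrt 2" by (simp add: power2_eq_square algebra_simps)
  hence d6: "(4 - sqrt 2)^2 \<ge> 6" using s2 by simp
  have "(Qinv e / sqrt N)^2 \<le> (2 * sqrt (ln 2) / (4 - sqrt 2))^2"
    using h a N by (intro power_mono) auto
  hence "Qinv e ^2 / N \<le> 4 * ln 2 / (4 - sqrt 2)^2"
    using N l2pos by (simp add: power_divide power_mult_distrib)
  also have "\<dots> \<le> 4 * ln 2 / 6" using d6 l2pos by (intro divide_left_mono) auto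
  finally have "Qinv e ^2 / N \<le> 2/3 * ln 2" by simp
  hence "Qinv e ^2 \<le> 2/3 * ln 2 * N" using N by (simp add: divide_le_eq)
  hence "(Qinv e / ln 2)^2 * ln 2 \<le> 2/3 * N" using l2pos
    by (simp add: power_divide power2_eq_square field_simps)
  thus ?thesis by simp
qed

lemma Ffun_zero: "m > 0 \<Longrightarrow> Ffun N e m 0 = N / m" unfolding Ffun_def by simp

lemma Gam_props:
  assumes N: "N > 0" and cond: "Qinv e / ln 2 \<le> 0 \<or> (Qinv e / ln 2)^2 * ln 2 \<le> 2/3 * N"
    and m0: "0 < m0" "m0 \<le> D1" and g0: "g0 > 0" "Ffun N e m0 g0 = 0"
  shows "Gam N e D1 > 0 \<and> Ffun N e D1 (Gam N e D1) = 0 \<and>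
    (\<forall>m g. 0 < m \<and> m \<le> D1 \<and> g > 0 \<and> Ffun N e m g = 0 \<longrightarrow>
        Gam N e D1 \<le> g \<and> D1 * Gam N e D1 \<le> m * g)"
proof -
  define c where "c = Qinv e / ln 2"
  have D1: "D1 > 0" using m0 by simp
  have X0: "Xf N c g0 = 1 / sqrt m0" using root_iff[OF N m0(1) g0(1)] g0(2) c_def by simp
  have "1 / sqrt D1 \<le> 1 / sqrt m0" using m0 by (intro divide_left_mono) auto
  hence le: "Xf N c 0 \<le> 1 / sqrt D1" "1 / sqrt D1 \<le> Xf N c g0" using X0 D1 Xf_0 by auto
  obtain \<gamma> where \<gamma>: "0 \<le> \<gamma>" "\<gamma> \<le> g0" "Xf N c \<gamma> = 1 / sqrt D1"
    using IVT'[OF le _ Xf_cont[OF N order_refl]] g0 by auto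
  have \<gamma>p: "\<gamma> > 0" using \<gamma> Xf_0[of N c] D1 by (cases "\<gamma> = 0") auto
  have root: "Ffun N e D1 \<gamma> = 0" using root_iff[OF N D1 \<gamma>p] \<gamma>(3) c_def by simp
  have cmp: "\<gamma> \<le> g" if "0 < m" "m \<le> D1" "g > 0" "Ffun N e m g = 0" for m g
  proof (rule ccontr)
    assume "\<not> \<gamma> \<le> g"
    hence "Xf N c g < Xf N c \<gamma>" using Xf_strict_mono[OF N \<open>g > 0\<close>] by simp
    moreover have "Xf N c g = 1 / sqrt m" using root_iff[OF N that(1,3)] that(4) c_def by simp
    moreover have "1 / sqrt D1 \<le> 1 / sqrt m" using that by (intro divide_left_mono) auto
    ultimately show False using \<gamma>(3) by simp
  qed
  have uniq: "g = \<gamma>" if "g > 0" "Ffun N e D1 g = 0" for g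
  proof -
    have "\<gamma> \<le> g" using cmp[OF D1 order_refl that] .
    moreover have "Xf N c g = 1 / sqrt D1" using root_iff[OF N D1 that(1)] that(2) c_def by simp
    ultimately show ?thesis using Xf_strict_mono[OF N \<gamma>p, where g'=g and c=c] \<gamma>(3)
      by (cases "\<gamma> < g") auto
  qed
  have G: "Gam N e D1 = \<gamma>" unfolding Gam_def
  proof (rule the_equality)
    show "\<gamma> > 0 \<and> Ffun N e D1 \<gamma> = 0" using \<gamma>p root by simp
    fix g assume "g > 0 \<and> Ffun N e D1 g = 0"
    thus "g = \<gamma>" using uniq by blast
  qed
  have prod: "D1 * \<gamma> \<le> m * g" if "0 < m" "m \<le> D1" "g > 0" "Ffun N e m g = 0" for m g
  proof -
    have "\<gamma> \<le> g" using cmp[OF that] .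
    hence "Tf N c g \<le> Tf N c \<gamma>" using Tf_antimono[OF N cond[folded c_def] \<gamma>p] by simp
    moreover have "Tf N c g = 1 / sqrt (m * g)" using root_Tf[OF N that(1,3,4)] c_def by simp
    moreover have "Tf N c \<gamma> = 1 / sqrt (D1 * \<gamma>)" using root_Tf[OF N D1 \<gamma>p root] c_def by simp
    ultimately have "1 / sqrt (m * g) \<le> 1 / sqrt (D1 * \<gamma>)" by simp
    moreover have "0 < sqrt (m * g)" "0 < sqrt (D1 * \<gamma>)" using that D1 \<gamma>p by auto
    ultimately have "sqrt (D1 * \<gamma>) \<le> sqrt (m * g)"
      by (metis divide_inverse mult_1 inverse_le_iff_le)
    thus ?thesis by simp
  qed
  show ?thesis unfolding G using \<gamma>p root cmp prod by blast
qed




lemma feas_g_pos: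
  assumes "Ffun N e m g = 0" "m > 0" "N > 0" "g \<ge> 0" shows "g > 0"
proof (rule ccontr)
  assume "\<not> g > 0" hence "g = 0" using assms by simp
  thus False using assms Ffun_zero[of m N e] by simp
qed

theorem corollary2:
  fixes h1 h2 :: complex
    and D1 D2 mhat Pmax N1 N2 e1 e2 :: real
  assumes "h1 \<noteq> 0" and "h2 \<noteq> 0" and "cmod h1 > cmod h2"
    and "D1 < D2" and "mhat > 0" and "Pmax > 0"
    and "N1 > 0" and "N2 > 0"
    and "0 < e1" and "e1 < 1" and "0 < e2" and "e2 < 1"
    and "Qinv e1 / sqrt N1 \<le> 2 * sqrt (ln 2) / (4 - sqrt 2)"
    and "Qinv e2 / sqrt N2 \<le> 2 * sqrt (ln 2) / (4 - sqrt 2)"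
    and "\<exists>m1 m2 p1 p2 g1 g2. feasible h1 h2 D1 mhat Pmax N1 N2 e1 e2 m1 m2 p1 p2 g1 g2"
  shows "let g1 = Gam N1 e1 D1; g2 = Gam N2 e2 D1;
             p1 = g1 / (cmod h1)^2;
             p2 = g1 * g2 / (cmod h1)^2 + g2 / (cmod h2)^2
         in feasible h1 h2 D1 mhat Pmax N1 N2 e1 e2 D1 D1 p1 p2 g1 g2 \<and>
            (\<forall>m1 m2 q1 q2 s1 s2.
               feasible h1 h2 D1 mhat Pmax N1 N2 e1 e2 m1 m2 q1 q2 s1 s2 \<longrightarrow>
               D1 * p1 + D1 * p2 \<le> m1 * q1 + m2 * q2)"
proof -
  define H1 where "H1 = (cmod h1)^2"
  define H2 where "H2 = (cmod h2)^2"
  have H1p: "H1 > 0" unfolding H1_def using assms(1) by simp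
  have H2p: "H2 > 0" unfolding H2_def using assms(2) by simp
  have c1: "Qinv e1 / ln 2 \<le> 0 \<or> (Qinv e1 / ln 2)^2 * ln 2 \<le> 2/3 * N1"
    by (rule cond_from[OF assms(7,13)])
  have c2: "Qinv e2 / ln 2 \<le> 0 \<or> (Qinv e2 / ln 2)^2 * ln 2 \<le> 2/3 * N2"
    by (rule cond_from[OF assms(8,14)])
  have fe: "m2 > 0 \<and> m1 > 0 \<and> m1 \<le> D1 \<and> m2 \<le> D1 \<and> g1 > 0 \<and> g2 > 0 \<and>
      p1 = g1 / H1 \<and> p2 = g1 * g2 / H1 + g2 / H2 \<and> p1 \<ge> 0 \<and> p2 \<ge> 0"
    if F: "feasible h1 h2 D1 mhat Pmax N1 N2 e1 e2 m1 m2 p1 p2 g1 g2" for m1 m2 p1 p2 g1 g2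
  proof -
    note F' = F[unfolded feasible_def, folded H1_def H2_def]
    have m: "m1 > 0" "m2 > 0" "m1 \<le> D1" "m2 \<le> D1" using F' assms(5) by auto
    have pp: "p1 \<ge> 0" "p2 \<ge> 0" using F' by auto
    have g1e: "g1 = p1 * H1" using F' by simp
    have den: "p1 * H2 + 1 > 0" using pp H2p by (smt (verit) mult_nonneg_nonneg)
    have g2e: "g2 = p2 * H2 / (p1 * H2 + 1)" using F' by simp
    have g1p: "g1 > 0" using feas_g_pos[of N1 e1 m1 g1] F' m assms(7) g1e pp H1p by simp
    have g2p: "g2 > 0" using feas_g_pos[of N2 e2 m2 g2] F' m assms(8) g2e pp H2p den by simp
    have p1e: "p1 = g1 / H1" using g1e H1p by simp
    have "p2 * H2 = g2 * (p1 * H2 + 1)" using g2e den by simp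
    hence "p2 = g2 * (p1 * H2 + 1) / H2" using H2p by (simp add: eq_divide_eq)
    also have "\<dots> = g1 * g2 / H1 + g2 / H2" using p1e H1p H2p by (simp add: field_simps)
    finally show ?thesis using m g1p g2p p1e pp by simp
  qed
  obtain m1 m2 p1 p2 g1 g2 where F: "feasible h1 h2 D1 mhat Pmax N1 N2 e1 e2 m1 m2 p1 p2 g1 g2"
    using assms(15) by blast
  note F0 = fe[OF F]
  have r1: "Ffun N1 e1 m1 g1 = 0" "Ffun N2 e2 m2 g2 = 0" "mhat \<le> m1" "p1 + p2 \<le> Pmax"
    using F unfolding feasible_def by blast+
  have F1: "0 < m1" "m1 \<le> D1" "0 < g1" "0 < m2" "m2 \<le> D1" "0 < g2" using F0 by simp_all
  have G1: "Gam N1 e1 D1 > 0 \<and> Ffun N1 e1 D1 (Gam N1 e1 D1) = 0 \<and>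
    (\<forall>m g. 0 < m \<and> m \<le> D1 \<and> g > 0 \<and> Ffun N1 e1 m g = 0 \<longrightarrow>
        Gam N1 e1 D1 \<le> g \<and> D1 * Gam N1 e1 D1 \<le> m * g)"
    using Gam_props[OF assms(7) c1 F1(1,2,3) r1(1)] .
  have G2: "Gam N2 e2 D1 > 0 \<and> Ffun N2 e2 D1 (Gam N2 e2 D1) = 0 \<and>
    (\<forall>m g. 0 < m \<and> m \<le> D1 \<and> g > 0 \<and> Ffun N2 e2 m g = 0 \<longrightarrow>
        Gam N2 e2 D1 \<le> g \<and> D1 * Gam N2 e2 D1 \<le> m * g)"
    using Gam_props[OF assms(8) c2 F1(4,5,6) r1(2)] .
  define \<Gamma>1 where "\<Gamma>1 = Gam N1 e1 D1"
  define \<Gamma>2 where "\<Gamma>2 = Gam N2 e2 D1"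
  define P1 where "P1 = \<Gamma>1 / H1"
  define P2 where "P2 = \<Gamma>1 * \<Gamma>2 / H1 + \<Gamma>2 / H2"
  have Gp: "\<Gamma>1 > 0" "\<Gamma>2 > 0" using G1 G2 \<Gamma>1_def \<Gamma>2_def by auto
  have D1p: "D1 > 0" using F0 by linarith
  have le1: "\<Gamma>1 \<le> g1" "D1 * \<Gamma>1 \<le> m1 * g1" using G1 F1 r1 unfolding \<Gamma>1_def by blast+
  have le2: "\<Gamma>2 \<le> g2" "D1 * \<Gamma>2 \<le> m2 * g2" using G2 F1 r1 unfolding \<Gamma>2_def by blast+
  have feasOpt: "feasible h1 h2 D1 mhat Pmax N1 N2 e1 e2 D1 D1 P1 P2 \<Gamma>1 \<Gamma>2"
  proof -
    have pow: "P1 + P2 \<le> p1 + p2"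
    proof -
      have "\<Gamma>1 * \<Gamma>2 \<le> g1 * g2" using le1 le2 Gp by (intro mult_mono) auto
      hence "\<Gamma>1 * \<Gamma>2 / H1 \<le> g1 * g2 / H1" using H1p by (intro divide_right_mono) auto
      moreover have "\<Gamma>1 / H1 \<le> g1 / H1" using le1 H1p by (intro divide_right_mono) auto
      moreover have "\<Gamma>2 / H2 \<le> g2 / H2" using le2 H2p by (intro divide_right_mono) auto
      ultimately show ?thesis unfolding P1_def P2_def using F0 by linarith
    qed
    have "\<Gamma>2 = P2 * H2 / (P1 * H2 + 1)"
    proof -
      have den: "P1 * H2 + 1 > 0" unfolding P1_def using Gp H1p H2p by (smt (verit) divide_pos_pos mult_pos_pos)
      have "P2 * H2 = \<Gamma>2 * (P1 * H2 + 1)" unfolding P1_def P2_def using H1p H2p by (simp add: field_simps)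
      thus ?thesis using den by simp
    qed
    moreover have "\<Gamma>1 = P1 * H1" unfolding P1_def using H1p by simp
    moreover have "P1 \<ge> 0" "P2 \<ge> 0" unfolding P1_def P2_def using Gp H1p H2p by auto
    moreover have "mhat \<le> D1" using r1 F1 by linarith
    moreover have "P1 + P2 \<le> Pmax" using pow r1 by linarith
    ultimately show ?thesis unfolding feasible_def H1_def[symmetric] H2_def[symmetric]
      using G1 G2 \<Gamma>1_def \<Gamma>2_def by simp
  qed
  have opt: "D1 * P1 + D1 * P2 \<le> m1' * q1 + m2' * q2"
    if Fq: "feasible h1 h2 D1 mhat Pmax N1 N2 e1 e2 m1' m2' q1 q2 s1 s2" for m1' m2' q1 q2 s1 s2
  proof -
    note Q = fe[OF Fq]
    have Q': "Ffun N1 e1 m1' s1 = 0" "Ffun N2 e2 m2' s2 = 0" using Fq unfolding feasible_def by blast+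
    have Q1: "0 < m1'" "m1' \<le> D1" "0 < s1" "0 < m2'" "m2' \<le> D1" "0 < s2" using Q by simp_all
    have a1: "\<Gamma>1 \<le> s1" "D1 * \<Gamma>1 \<le> m1' * s1" using G1 Q1 Q' unfolding \<Gamma>1_def by blast+
    have a2: "D1 * \<Gamma>2 \<le> m2' * s2" using G2 Q1 Q' unfolding \<Gamma>2_def by blast
    have t3: "(D1 * \<Gamma>2) * \<Gamma>1 \<le> (m2' * s2) * s1" by (rule mult_mono[OF a2 a1(1)]) (use Q1 Gp in auto)
    have "D1 * P1 + D1 * P2 = (D1 * \<Gamma>1) / H1 + ((D1 * \<Gamma>2) * \<Gamma>1) / H1 + (D1 * \<Gamma>2) / H2"
      unfolding P1_def P2_def by (simp add: algebra_simps add_divide_distrib)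
    also have "\<dots> \<le> (m1' * s1) / H1 + ((m2' * s2) * s1) / H1 + (m2' * s2) / H2"
      using a1 a2 t3 H1p H2p by (intro add_mono divide_right_mono) auto
    also have "\<dots> = m1' * q1 + m2' * q2"
    proof -
      have "q1 = s1 / H1" "q2 = s1 * s2 / H1 + s2 / H2" using Q by simp_all
      thus ?thesis by (simp add: algebra_simps add_divide_distrib)
    qed
    finally show ?thesis .
  qed
  show ?thesis unfolding Let_def H1_def[symmetric] H2_def[symmetric]
    using feasOpt opt unfolding P1_def P2_def \<Gamma>1_def \<Gamma>2_def by blast
qed



end
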